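(* Let $q\in[0,1]$ and let $X_1,\dots,X_m$ be real numbers (observed $z$-statistics) with associated one-sided p-values $P_i=\Phi(X_i)$, where $\Phi$ is the standard normal cumulative distribution function. Let $P_{(1)}\le\dots\le P_{(m)}$ be the ordered p-values, $I^*=\max\{i: P_{(i)}\le (i/m)q\}$ and $P^*=P_{(I^* )}$ (with the convention that if no such $i$ exists the set $\{i:P_i\le P^*\}$ below is empty). Consider the iteration $\mathcal S^1=\{1,\dots,m\}$ and, for $t=1,2,\dots$, $$U_i^t=X_i+\Phi^{-1}\big(1-q|\mathcal S^t|/m\big),\ i\in\mathcal S^t,\qquad \mathcal S^{t+1}=\{i\in\mathcal S^t: U_i^t\le 0\}.$$ Then this iteration converges in finite time: there is a finite $T\ge1$ such that $\mathcal S^{T+1}=\mathcal S^T$ (taking $T$ to be the first such index) and $\mathcal S^t=\mathcal S^T$ for all $t\ge T$. Moreover, $\mathcal S^T=\{i: P_i\le P^*\}$, i.e. the set of hypotheses $H_i:\theta_i\ge 0$ rejected by the Benjamini–Hochberg procedure at level $q$.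
   Context: In the motivating model $X_i\sim\mathcal N(\theta_i,1)$ independently; the iteration is the repeated application of the Benjamini–Yekutieli one-sided confidence interval adjustment $(-\infty,U_i^t)$ followed by keeping only those intervals that do not cover $0$. The Benjamini–Hochberg procedure at level $q$ rejects $H_i$ iff $P_i\le P^*$. *)

theory Defs
  imports "HOL-Probability.Probability"
begin

definition Phi :: "real \<Rightarrow> real" where
  "Phi x = cdf (density lborel std_normal_density) x"

definition Phi_inv :: "real \<Rightarrow> ereal" where
  "Phi_inv p = (if p \<le> 0 then MInfty else if p \<ge> 1 then PInfty
                else ereal (THE x. Phi x = p))"

definition pval :: "(nat \<Rightarrow> real) \<Rightarrow> nat \<Rightarrow> real" where
  "pval X i = Phi (X i)"

text \<open>Ordered p-values P_(1) <= ... <= P_(m): P_(i) = ordered_pvals m X ! (i-1).\<close>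
definition ordered_pvals :: "nat \<Rightarrow> (nat \<Rightarrow> real) \<Rightarrow> real list" where
  "ordered_pvals m X = sort (map (pval X) [1..<m+1])"

definition BH_candidates :: "nat \<Rightarrow> real \<Rightarrow> (nat \<Rightarrow> real) \<Rightarrow> nat set" where
  "BH_candidates m q X =
     {i \<in> {1..m}. ordered_pvals m X ! (i - 1) \<le> real i / real m * q}"

definition BH_rejections :: "nat \<Rightarrow> real \<Rightarrow> (nat \<Rightarrow> real) \<Rightarrow> nat set" where
  "BH_rejections m q X =
     (if BH_candidates m q X = {} then {}
      else {i \<in> {1..m}. pval X i \<le> ordered_pvals m X ! (Max (BH_candidates m q X) - 1)})"

end

theory Submission
  imports Defs
begin


abbreviation "NM \<equiv> density lborel std_normal_density"

lemma NM_real_distribution: "real_distribution NM"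
proof -
  interpret prob_space NM by (rule prob_space_normal_density) simp
  show ?thesis by unfold_locales auto
qed

interpretation NM: real_distribution NM by (rule NM_real_distribution)

lemma Phi_cdf: "Phi = cdf NM" by (simp add: Phi_def[abs_def])

lemma NM_null_iff: "A \<in> null_sets NM \<longleftrightarrow> A \<in> null_sets lborel"
proof -
  have "A \<in> null_sets NM \<longleftrightarrow> A \<in> sets lborel \<and> (AE x in lborel. x \<in> A \<longrightarrow> ennreal (std_normal_density x) = 0)"
    by (intro null_sets_density_iff) measurable
  also have "\<dots> \<longleftrightarrow> A \<in> sets lborel \<and> (AE x in lborel. x \<notin> A)"
  proof -
    have p: "0 < std_normal_density x" for x by (rule normal_density_pos) simp
    have "std_normal_density x \<noteq> 0" for x using p[of x] by linarith
    thus ?thesis by simp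
  qed
  also have "\<dots> \<longleftrightarrow> A \<in> null_sets lborel"
    using AE_iff_null_sets[of A lborel] null_setsD2[of A lborel] by blast
  finally show ?thesis .
qed

lemma NM_singleton: "measure NM {x} = 0"
proof -
  have "{x} \<in> null_sets NM" using NM_null_iff[of "{x}"] finite_imp_null_set_lborel[of "{x}"] by simp
  thus ?thesis by (simp add: measure_def null_setsD1)
qed

lemma Phi_cont: "isCont Phi x"
  unfolding Phi_cdf using NM.isCont_cdf NM_singleton by blast

lemma Phi_strict: assumes "x < y" shows "Phi x < Phi y"
proof -
  have "{x<..y} \<notin> null_sets lborel"
  proof
    assume "{x<..y} \<in> null_sets lborel"
    hence "emeasure lborel {x<..y} = 0" by (rule null_setsD1)
    thus False using assms by simp
  qed
  hence "{x<..y} \<notin> null_sets NM" using NM_null_iff by blast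
  hence "measure NM {x<..y} \<noteq> 0"
  proof (intro notI)
    assume "measure NM {x<..y} = 0"
    hence "emeasure NM {x<..y} = 0" by (simp add: NM.emeasure_eq_measure)
    hence "{x<..y} \<in> null_sets NM" by (intro null_setsI) auto
    thus False using \<open>{x<..y} \<notin> null_sets NM\<close> by blast
  qed
  hence "measure NM {x<..y} > 0" using measure_nonneg by (metis order_le_less)
  thus ?thesis unfolding Phi_cdf using NM.cdf_diff_eq[OF assms] by linarith
qed

lemma Phi_pos: "0 < Phi x"
  using Phi_strict[of "x-1" x] NM.cdf_nonneg[of "x-1"] unfolding Phi_cdf by simp

lemma Phi_less1: "Phi x < 1"
  using Phi_strict[of x "x+1"] NM.cdf_bounded_prob[of "x+1"] unfolding Phi_cdf by simp

lemma Phi_mono_iff: "Phi x \<le> Phi y \<longleftrightarrow> x \<le> y"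
  using Phi_strict[of x y] Phi_strict[of y x] by (cases x y rule: linorder_cases) auto

lemma Phi_sym: "Phi (- x) = 1 - Phi x"
proof -
  have f: "(\<lambda>t. ennreal (std_normal_density t) * indicator A t) \<in> borel_measurable borel"
    if "A \<in> sets borel" for A :: "real set" using that by measurable
  have "emeasure NM {..-x} = (\<integral>\<^sup>+t. ennreal (std_normal_density t) * indicator {..-x} t \<partial>lborel)"
    by (intro emeasure_density) auto
  also have "\<dots> = (\<integral>\<^sup>+t. ennreal (std_normal_density (0 + -1 * t)) * indicator {..-x} (0 + -1 * t) \<partial>lborel)"
    using nn_integral_real_affine[OF f[of "{..-x}"], of "-1" 0] by simp
  also have "\<dots> = (\<integral>\<^sup>+t. ennreal (std_normal_density t) * indicator {x..} t \<partial>lborel)"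
    by (intro nn_integral_cong) (auto simp: normal_density_def indicator_def)
  also have "\<dots> = emeasure NM {x..}"
    by (intro emeasure_density[symmetric]) auto
  finally have "measure NM {..-x} = measure NM {x..}" by (simp add: NM.emeasure_eq_measure)
  also have "{x..} = UNIV - {..<x}" by auto
  also have "measure NM (UNIV - {..<x}) = 1 - measure NM {..<x}"
    using NM.prob_compl[of "{..<x}"] by simp
  also have "measure NM {..x} = measure NM {..<x} + measure NM {x}"
  proof -
    have "{..x} = {..<x} \<union> {x}" by auto
    thus ?thesis using NM.finite_measure_Union[of "{..<x}" "{x}"] by simp
  qed
  hence "measure NM {..<x} = Phi x" using NM_singleton unfolding Phi_cdf cdf_def by simp
  finally show ?thesis unfolding Phi_cdf cdf_def by simp
qed

lemma Phi_surj: assumes "0 < p" "p < 1" shows "\<exists>y. Phi y = p"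
proof -
  have "eventually (\<lambda>x. Phi x < p) at_bot"
    using NM.cdf_lim_at_bot assms(1) unfolding Phi_cdf by (simp add: order_tendstoD(2))
  then obtain a where a: "Phi a < p" by (auto simp: eventually_at_bot_linorder)
  have "eventually (\<lambda>x. Phi x > p) at_top"
    using NM.cdf_lim_at_top_prob assms(2) unfolding Phi_cdf by (simp add: order_tendstoD(1))
  then obtain b where b: "Phi b > p" by (auto simp: eventually_at_top_linorder)
  have "a \<le> b" using a b Phi_mono_iff[of b a] by linarith
  have "continuous_on {a..b} Phi" using Phi_cont by (simp add: continuous_at_imp_continuous_on)
  from IVT'[of Phi a p b, OF _ _ \<open>a \<le> b\<close> this] a b show ?thesis by force
qed

lemma Phi_inv_eq: assumes "0 < p" "p < 1" shows "Phi_inv p = ereal (THE y. Phi y = p)" "Phi (THE y. Phi y = p) = p"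
proof -
  show "Phi_inv p = ereal (THE y. Phi y = p)" using assms by (simp add: Phi_inv_def)
  obtain y where y: "Phi y = p" using Phi_surj[OF assms] by blast
  have "\<exists>!y. Phi y = p" using y Phi_mono_iff by (metis order_antisym order_refl)
  thus "Phi (THE y. Phi y = p) = p" by (rule theI')
qed

lemma step_iff:
  assumes "0 \<le> p" "p \<le> 1"
  shows "(ereal x + Phi_inv (1 - p) \<le> 0) \<longleftrightarrow> Phi x \<le> p"
proof (cases "p = 0 \<or> p = 1")
  case True
  then show ?thesis using Phi_pos[of x] Phi_less1[of x] by (auto simp: Phi_inv_def)
next
  case False
  hence p: "0 < 1 - p" "1 - p < 1" using assms by auto
  define y where "y = (THE y. Phi y = 1 - p)"
  have e: "Phi_inv (1 - p) = ereal y" "Phi y = 1 - p" using Phi_inv_eq[OF p] by (auto simp: y_def)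
  have "(ereal x + Phi_inv (1 - p) \<le> 0) \<longleftrightarrow> x \<le> - y" using e(1) by auto
  also have "\<dots> \<longleftrightarrow> Phi x \<le> Phi (- y)" using Phi_mono_iff by simp
  also have "Phi (- y) = p" using Phi_sym e(2) by simp
  finally show ?thesis .
qed



lemma card_filter_sort:
  fixes p :: "nat \<Rightarrow> real"
  shows "card {j\<in>{1..m}. p j \<le> c} = length (filter (\<lambda>v. v \<le> c) (sort (map p [1..<m+1])))"
proof -
  have "{j\<in>{1..m}. p j \<le> c} = set (filter (\<lambda>j. p j \<le> c) [1..<m+1])" by auto
  hence "card {j\<in>{1..m}. p j \<le> c} = length (filter (\<lambda>j. p j \<le> c) [1..<m+1])"
    by (simp only: distinct_card[OF distinct_filter[OF distinct_upt]])
  also have "\<dots> = length (filter (\<lambda>v. v \<le> c) (map p [1..<m+1]))"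
    by (simp only: filter_map length_map o_def)
  also have "\<dots> = length (filter (\<lambda>v. v \<le> c) (sort (map p [1..<m+1])))"
    by (metis mset_filter mset_sort size_mset)
  finally show ?thesis .
qed

lemma sorted_filter_len:
  fixes L :: "real list"
  assumes "sorted L" "r < length L"
  shows "L ! r \<le> c \<longleftrightarrow> r + 1 \<le> length (filter (\<lambda>v. v \<le> c) L)"
proof -
  have eq: "length (filter (\<lambda>v. v \<le> c) L) = card {j. j < length L \<and> L ! j \<le> c}"
    by (rule length_filter_conv_card)
  show ?thesis
  proof
    assume h: "L ! r \<le> c"
    have "{0..r} \<subseteq> {j. j < length L \<and> L ! j \<le> c}"
    proof
      fix j assume "j \<in> {0..r}"
      hence j: "j \<le> r" by simp
      have "L ! j \<le> L ! r" using sorted_nth_mono[OF assms(1) j assms(2)] .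
      thus "j \<in> {j. j < length L \<and> L ! j \<le> c}" using j assms(2) h by simp
    qed
    hence "card {0..r} \<le> card {j. j < length L \<and> L ! j \<le> c}" by (intro card_mono) auto
    thus "r + 1 \<le> length (filter (\<lambda>v. v \<le> c) L)" using eq by simp
  next
    assume h: "r + 1 \<le> length (filter (\<lambda>v. v \<le> c) L)"
    show "L ! r \<le> c"
    proof (rule ccontr)
      assume "\<not> L ! r \<le> c"
      have "{j. j < length L \<and> L ! j \<le> c} \<subseteq> {..<r}"
      proof
        fix j assume "j \<in> {j. j < length L \<and> L ! j \<le> c}"
        hence j: "j < length L" "L ! j \<le> c" by auto
        show "j \<in> {..<r}"
        proof (rule ccontr)
          assume "j \<notin> {..<r}"
          hence "r \<le> j" by simp
          hence "L ! r \<le> L ! j" using sorted_nth_mono[OF assms(1) _ j(1)] by blast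
          thus False using j \<open>\<not> L ! r \<le> c\<close> by linarith
        qed
      qed
      hence "card {j. j < length L \<and> L ! j \<le> c} \<le> r"
        using card_mono[OF finite_lessThan[of r]] by fastforce
      thus False using h eq by simp
    qed
  qed
qed

lemma L1:
  assumes "r < m"
  shows "ordered_pvals m X ! r \<le> c \<longleftrightarrow> r + 1 \<le> card {j\<in>{1..m}. pval X j \<le> c}"
  unfolding card_filter_sort ordered_pvals_def
  by (rule sorted_filter_len) (use assms in auto)



definition Fstep :: "nat \<Rightarrow> real \<Rightarrow> (nat \<Rightarrow> real) \<Rightarrow> nat set \<Rightarrow> nat set" where
  "Fstep m q X A = {i \<in> A. pval X i \<le> q * real (card A) / real m}"

lemma R_sub: "BH_rejections m q X \<subseteq> {1..m}"
  by (auto simp: BH_rejections_def)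

lemma cand_facts:
  assumes "BH_candidates m q X \<noteq> {}"
  defines "I \<equiv> Max (BH_candidates m q X)"
  shows "I \<in> {1..m}" "ordered_pvals m X ! (I - 1) \<le> real I / real m * q"
    "I \<le> card (BH_rejections m q X)"
    "\<And>k. k \<in> BH_candidates m q X \<Longrightarrow> k \<le> I"
proof -
  have fin: "finite (BH_candidates m q X)" by (auto simp: BH_candidates_def)
  have Iin: "I \<in> BH_candidates m q X" unfolding I_def using Max_in[OF fin assms(1)] .
  thus "I \<in> {1..m}" "ordered_pvals m X ! (I - 1) \<le> real I / real m * q"
    by (auto simp: BH_candidates_def)
  show "\<And>k. k \<in> BH_candidates m q X \<Longrightarrow> k \<le> I" unfolding I_def using fin by simp
  have "I - 1 < m" using \<open>I \<in> {1..m}\<close> by auto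
  from L1[OF this, of X "ordered_pvals m X ! (I - 1)"]
  have "I - 1 + 1 \<le> card {j\<in>{1..m}. pval X j \<le> ordered_pvals m X ! (I - 1)}" by simp
  thus "I \<le> card (BH_rejections m q X)"
    using assms(1) \<open>I \<in> {1..m}\<close> unfolding BH_rejections_def I_def by simp
qed

lemma R_in_F:
  assumes "0 \<le> q" "BH_rejections m q X \<subseteq> A" "finite A"
  shows "BH_rejections m q X \<subseteq> Fstep m q X A"
proof (cases "BH_candidates m q X = {}")
  case True
  then show ?thesis by (simp add: BH_rejections_def)
next
  case False
  define I where "I = Max (BH_candidates m q X)"
  note cf = cand_facts[OF False, folded I_def]
  have m: "real m > 0" using cf(1) by auto
  have "card (BH_rejections m q X) \<le> card A" using assms by (intro card_mono) auto
  hence IA: "real I \<le> real (card A)" using cf(3) by simp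
  have "real I / real m * q \<le> q * real (card A) / real m"
    using mult_left_mono[OF IA assms(1)] m by (simp add: field_simps)
  show ?thesis
  proof
    fix i assume i: "i \<in> BH_rejections m q X"
    hence "pval X i \<le> ordered_pvals m X ! (I - 1)"
      using False by (simp add: BH_rejections_def I_def)
    also have "\<dots> \<le> q * real (card A) / real m" using cf(2) \<open>real I / real m * q \<le> _\<close> by linarith
    finally show "i \<in> Fstep m q X A" using i assms(2) by (auto simp: Fstep_def)
  qed
qed

lemma fix_R:
  assumes "Fstep m q X A = A" "BH_rejections m q X \<subseteq> A" "A \<subseteq> {1..m}"
  shows "A = BH_rejections m q X"
proof (cases "card A = 0")
  case True
  hence "A = {}" using assms(3) finite_subset by fastforce
  then show ?thesis using assms(2) by auto
next
  case False
  define k where "k = card A"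
  have km: "k \<le> m" unfolding k_def using card_mono[OF _ assms(3)] by simp
  have all: "pval X i \<le> q * real k / real m" if "i \<in> A" for i
    using assms(1) that unfolding Fstep_def k_def by blast
  have "A \<subseteq> {j\<in>{1..m}. pval X j \<le> q * real k / real m}" using all assms(3) by auto
  hence "k \<le> card {j\<in>{1..m}. pval X j \<le> q * real k / real m}" unfolding k_def
    by (intro card_mono) auto
  moreover have "k - 1 < m" using km False k_def by linarith
  ultimately have "ordered_pvals m X ! (k - 1) \<le> q * real k / real m"
    using L1[of "k-1" m X] False k_def by simp
  hence kc: "k \<in> BH_candidates m q X" using km False k_def
    by (auto simp: BH_candidates_def mult.commute)
  hence ne: "BH_candidates m q X \<noteq> {}" by auto
  define I where "I = Max (BH_candidates m q X)"
  note cf = cand_facts[OF ne, folded I_def]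
  have "card A \<le> card (BH_rejections m q X)" using cf(3) cf(4)[OF kc] k_def by simp
  thus ?thesis using assms(2) card_seteq[OF finite_subset[OF assms(3)] assms(2)] by auto
qed

lemma ratio_bounds:
  assumes "0 \<le> q" "q \<le> 1" "card A \<le> m"
  shows "0 \<le> q * real (card A) / real m" "q * real (card A) / real m \<le> 1"
proof -
  show "0 \<le> q * real (card A) / real m" using assms by simp
  show "q * real (card A) / real m \<le> 1"
  proof (cases "m = 0")
    case True then show ?thesis by simp
  next
    case False
    have "q * real (card A) \<le> 1 * real m"
      using mult_mono[OF assms(2), of "real (card A)" "real m"] assms by simp
    thus ?thesis using False by (simp add: divide_le_eq)
  qed
qed

theorem proposition1:
  fixes m :: nat and q :: real and X :: "nat \<Rightarrow> real" and S :: "nat \<Rightarrow> nat set"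
  assumes "0 \<le> q" and "q \<le> 1"
    and S1: "S 1 = {1..m}"
    and Sstep: "\<And>t. t \<ge> 1 \<Longrightarrow>
       S (t + 1) = {i \<in> S t. ereal (X i) + Phi_inv (1 - q * real (card (S t)) / real m) \<le> 0}"
  shows "\<exists>T \<ge> 1. S (T + 1) = S T
            \<and> (\<forall>t. 1 \<le> t \<and> t < T \<longrightarrow> S (t + 1) \<noteq> S t)
            \<and> (\<forall>t \<ge> T. S t = S T)
            \<and> S T = BH_rejections m q X"
proof -
  define R where "R = BH_rejections m q X"
  have step: "S (t + 1) = Fstep m q X (S t)" if t: "t \<ge> 1" and sub: "S t \<subseteq> {1..m}" for t
  proof -
    have cm: "card (S t) \<le> m" using card_mono[OF _ sub] by simp
    note rb = ratio_bounds[OF assms(1,2) cm]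
    show ?thesis unfolding Sstep[OF t] Fstep_def pval_def
      using step_iff[OF rb] by simp
  qed
  have sub: "S (n + 1) \<subseteq> {1..m} \<and> R \<subseteq> S (n + 1)" for n
  proof (induction n)
    case 0 then show ?case using S1 R_sub by (simp add: R_def)
  next
    case (Suc n)
    have e: "S (Suc n + 1) = Fstep m q X (S (n + 1))" using step[of "n+1"] Suc by simp
    have "Fstep m q X (S (n + 1)) \<subseteq> S (n + 1)" by (auto simp: Fstep_def)
    moreover have "R \<subseteq> Fstep m q X (S (n + 1))" unfolding R_def
      using R_in_F[OF assms(1)] Suc finite_subset by (metis R_def finite_atLeastAtMost)
    ultimately show ?case using e Suc by auto
  qed
  have subt: "S t \<subseteq> {1..m}" "R \<subseteq> S t" if "t \<ge> 1" for t
    using sub[of "t - 1"] that by simp_all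
  have stept: "S (t + 1) = Fstep m q X (S t)" if "t \<ge> 1" for t
    using step[OF that subt(1)[OF that]] .
  have ex: "\<exists>t\<ge>1. S (t + 1) = S t"
  proof (rule ccontr)
    assume "\<not> ?thesis"
    hence ne: "S (t + 1) \<noteq> S t" if "t \<ge> 1" for t using that by blast
    have lt: "card (S (n + 2)) < card (S (n + 1))" for n
    proof -
      have "S (n + 2) \<subseteq> S (n + 1)" using stept[of "n+1"] by (auto simp: Fstep_def)
      moreover have "S (n + 2) \<noteq> S (n + 1)" using ne[of "n+1"] by simp
      moreover have "finite (S (n + 1))" using subt(1)[of "n+1"] finite_subset by auto
      ultimately show ?thesis by (intro psubset_card_mono) auto
    qed
    have "card (S (n + 1)) + n \<le> m" for n
    proof (induction n)
      case 0 then show ?case using S1 by simp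
    next
      case (Suc n) then show ?case using lt[of n] by simp
    qed
    from this[of "m + 1"] show False by simp
  qed
  define T where "T = (LEAST t. t \<ge> 1 \<and> S (t + 1) = S t)"
  have T: "T \<ge> 1" "S (T + 1) = S T" using LeastI_ex[OF ex[unfolded Bex_def[symmetric]]] T_def
    by (auto simp: atLeast_def)
  have Tmin: "S (t + 1) \<noteq> S t" if "1 \<le> t" "t < T" for t
    using not_less_Least[of t "\<lambda>t. t \<ge> 1 \<and> S (t + 1) = S t"] that T_def by auto
  have stay: "S t = S T" if "t \<ge> T" for t
    using that
  proof (induction t rule: dec_induct)
    case base then show ?case by simp
  next
    case (step n)
    have "S (Suc n) = Fstep m q X (S n)" using stept[of n] step T(1) by simp
    also have "\<dots> = Fstep m q X (S T)" using step by simp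
    also have "\<dots> = S T" using stept[OF T(1)] T(2) by simp
    finally show ?case .
  qed
  have "S T = R"
    using fix_R[of m q X "S T"] stept[OF T(1)] T(2) subt[OF T(1)] unfolding R_def by simp
  thus ?thesis using T Tmin stay unfolding R_def by blast
qed

end
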